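(* Let $M$ be a compact connected $1$-manifold (the circle $\mathrm{S}^1$ or a closed interval), and let $G$ be a group acting faithfully by homeomorphisms of $M$, generated by a finite symmetric set $\mathcal{G}$ (i.e. $\mathcal{G}=\mathcal{G}^{-1}$), with $|\mathcal{G}|\ge 2$. Let $\varepsilon > \log(|\mathcal{G}|-1)$. Then there is a homeomorphism $h$ of $M$ such that for every $g \in \mathcal{G}$, the homeomorphism $h g h^{-1}$ is Lipschitz with Lipschitz constant at most $e^{\varepsilon}$ (with respect to the standard metric of $M$, normalized to have total length $1$). In particular, $G$ is topologically conjugate to a group of Lipschitz homeomorphisms of $M$.
   Context: For $f\in G$, the word length $\|f\|$ is the minimal number of factors needed to write $f$ as a product of elements of $\mathcal{G}$ (with $\|id\|=0$). *)

theory Defs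
  imports "HOL-Analysis.Analysis"
begin

text \<open>The two compact connected 1-manifolds, both realised as subsets of the complex plane,
each with its standard metric normalised to total length 1.\<close>

definition circle_dist :: "complex \<Rightarrow> complex \<Rightarrow> real" where
  "circle_dist z w = \<bar>Arg (z / w)\<bar> / (2 * pi)"

definition unit_interval_c :: "complex set" where
  "unit_interval_c = complex_of_real ` {0..1}"

definition one_manifold_model :: "complex set \<Rightarrow> (complex \<Rightarrow> complex \<Rightarrow> real) \<Rightarrow> bool" where
  "one_manifold_model M d \<longleftrightarrow>
     (M = sphere 0 1 \<and> d = circle_dist) \<or>
     (M = unit_interval_c \<and> d = (\<lambda>z w. dist z w))"

text \<open>Homeomorphisms of M, viewed as maps that are the identity outside M
(so that equality of such maps is equality as self-maps of M).\<close>
definition homeo_of :: "complex set \<Rightarrow> (complex \<Rightarrow> complex) \<Rightarrow> bool" where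
  "homeo_of M f \<longleftrightarrow> (\<exists>g. homeomorphism M M f g) \<and> (\<forall>x. x \<notin> M \<longrightarrow> f x = x)"

definition lipschitz_wrt :: "complex set \<Rightarrow> (complex \<Rightarrow> complex \<Rightarrow> real) \<Rightarrow> real \<Rightarrow> (complex \<Rightarrow> complex) \<Rightarrow> bool" where
  "lipschitz_wrt M d L f \<longleftrightarrow> (\<forall>x\<in>M. \<forall>y\<in>M. d (f x) (f y) \<le> L * d x y)"

end

theory Submission
  imports Defs "HOL-Probability.Probability"
begin

fun red_ok :: "('a \<Rightarrow> 'a) \<Rightarrow> 'a list \<Rightarrow> bool" where
  "red_ok iv [] = True"
| "red_ok iv [x] = True"
| "red_ok iv (x # y # u) = (y \<noteq> iv x \<and> red_ok iv (y # u))"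

definition RWn :: "'a set \<Rightarrow> ('a \<Rightarrow> 'a) \<Rightarrow> nat \<Rightarrow> 'a list set" where
  "RWn G iv n = {u. set u \<subseteq> G \<and> red_ok iv u \<and> length u = n}"

lemma RWn_finite: "finite G \<Longrightarrow> finite (RWn G iv n)"
  unfolding RWn_def by (rule finite_subset[OF _ finite_lists_length_eq[of G n]]) auto

lemma RWn_card:
  assumes fin: "finite G" and k: "card G \<ge> 2" and ivG: "\<And>x. x \<in> G \<Longrightarrow> iv x \<in> G"
    and ivv: "\<And>x. x \<in> G \<Longrightarrow> iv (iv x) = x"
  shows "card (RWn G iv n) \<le> card G * (card G - 1) ^ n"
proof (induction n rule: nat_less_induct)
  case (1 n)
  show ?case
  proof (cases n)
    case 0
    have "RWn G iv 0 \<subseteq> {[]}" unfolding RWn_def by auto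
    hence "card (RWn G iv 0) \<le> card {[]::'a list}" by (intro card_mono) auto
    hence "card (RWn G iv 0) \<le> 1" by simp
    thus ?thesis using 0 k by simp
  next
    case (Suc m)
    show ?thesis
    proof (cases m)
      case 0
      have "RWn G iv 1 \<subseteq> (\<lambda>x. [x]) ` G" unfolding RWn_def
        by (auto simp: length_Suc_conv)
      hence "card (RWn G iv 1) \<le> card G" by (meson card_image_le card_mono fin finite_imageI order_trans)
      moreover have "card G * 1 \<le> card G * (card G - 1)" using k by (intro mult_le_mono2) auto
      ultimately show ?thesis using Suc 0 by (metis One_nat_def le_trans mult_1_right power_one_right)
    next
      case (Suc j)
      have sub: "RWn G iv n \<subseteq> (\<Union>u\<in>RWn G iv m. (\<lambda>x. x # u) ` (G - {iv (hd u)}))"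
      proof
        fix v assume v: "v \<in> RWn G iv n"
        then obtain x y u where vv: "v = x # y # u" using \<open>n = Suc m\<close> Suc unfolding RWn_def
          by (auto simp: length_Suc_conv)
        have "y # u \<in> RWn G iv m" using v vv \<open>n = Suc m\<close> unfolding RWn_def by auto
        moreover have "x \<in> G - {iv y}" using v vv ivv unfolding RWn_def by auto
        ultimately show "v \<in> (\<Union>u\<in>RWn G iv m. (\<lambda>x. x # u) ` (G - {iv (hd u)}))"
          using vv by force
      qed
      have "card (RWn G iv n) \<le> card (\<Union>u\<in>RWn G iv m. (\<lambda>x. x # u) ` (G - {iv (hd u)}))"
        by (rule card_mono[OF _ sub]) (auto intro!: finite_UN_I RWn_finite fin)
      also have "\<dots> \<le> (\<Sum>u\<in>RWn G iv m. card ((\<lambda>x. x # u) ` (G - {iv (hd u)})))"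
        by (rule card_UN_le) (rule RWn_finite[OF fin])
      also have "\<dots> \<le> (\<Sum>u\<in>RWn G iv m. card G - 1)"
      proof (rule sum_mono)
        fix u assume u: "u \<in> RWn G iv m"
        then have "u \<noteq> []" using Suc unfolding RWn_def by auto
        hence "hd u \<in> G" using u unfolding RWn_def by auto
        hence "card (G - {iv (hd u)}) = card G - 1" using ivG fin by simp
        thus "card ((\<lambda>x. x # u) ` (G - {iv (hd u)})) \<le> card G - 1"
          by (metis card_image_le fin finite_Diff)
      qed
      also have "\<dots> = card (RWn G iv m) * (card G - 1)" by simp
      also have "\<dots> \<le> card G * (card G - 1) ^ m * (card G - 1)"
        using 1 \<open>n = Suc m\<close> by (simp add: mult_right_mono)
      finally show ?thesis using \<open>n = Suc m\<close> by (simp add: mult.commute mult.left_commute)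
    qed
  qed
qed

definition RW :: "'a set \<Rightarrow> ('a \<Rightarrow> 'a) \<Rightarrow> 'a list set" where
  "RW G iv = {u. set u \<subseteq> G \<and> red_ok iv u}"

lemma RW_summable:
  assumes fin: "finite G" and k: "card G \<ge> 2" and ivG: "\<And>x. x \<in> G \<Longrightarrow> iv x \<in> G"
    and ivv: "\<And>x. x \<in> G \<Longrightarrow> iv (iv x) = x"
    and eps: "\<epsilon> > ln (real (card G) - 1)"
  shows "(\<lambda>u. exp (- \<epsilon> * real (length u))) summable_on RW G iv"
proof (rule nonneg_bdd_above_summable_on)
  define k where "k = real (card G)"
  define r where "r = (k - 1) * exp (- \<epsilon>)"
  have k1: "k - 1 \<ge> 1" using k unfolding k_def by simp
  have "ln (k - 1) < \<epsilon>" using eps unfolding k_def .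
  hence "exp (ln (k - 1)) < exp \<epsilon>" by simp
  hence "k - 1 < exp \<epsilon>" using k1 by simp
  hence r1: "r < 1" unfolding r_def by (simp add: exp_minus field_simps)
  have r0: "r > 0" unfolding r_def using k1 by simp
  show "bdd_above (sum (\<lambda>u. exp (- \<epsilon> * real (length u))) ` {F. F \<subseteq> RW G iv \<and> finite F})"
  proof (rule bdd_aboveI2)
    fix X assume X: "X \<in> {F. F \<subseteq> RW G iv \<and> finite F}"
    define N where "N = Suc (Max (insert 0 (length ` X)))"
    have XU: "X \<subseteq> (\<Union>n\<in>{..<N}. RWn G iv n)"
    proof
      fix u assume "u \<in> X"
      hence "length u < N" using X unfolding N_def by (simp add: le_imp_less_Suc)
      thus "u \<in> (\<Union>n\<in>{..<N}. RWn G iv n)" using X \<open>u \<in> X\<close> unfolding RW_def RWn_def by auto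
    qed
    have "(\<Sum>u\<in>X. exp (- \<epsilon> * real (length u))) \<le> (\<Sum>u\<in>(\<Union>n\<in>{..<N}. RWn G iv n). exp (- \<epsilon> * real (length u)))"
      by (rule sum_mono2[OF _ XU]) (auto intro!: RWn_finite fin)
    also have "\<dots> = (\<Sum>n<N. \<Sum>u\<in>RWn G iv n. exp (- \<epsilon> * real (length u)))"
      apply (rule sum.UNION_disjoint)
      subgoal by simp
      subgoal using RWn_finite[OF fin] by blast
      subgoal by (auto simp: RWn_def)
      done
    also have "\<dots> = (\<Sum>n<N. real (card (RWn G iv n)) * exp (- \<epsilon> * real n))"
      by (rule sum.cong) (auto simp: RWn_def)
    also have "\<dots> \<le> (\<Sum>n<N. k * (k - 1) ^ n * exp (- \<epsilon> * real n))"
    proof (rule sum_mono)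
      fix n
      have "real (card (RWn G iv n)) \<le> real (card G * (card G - 1) ^ n)"
        using RWn_card[OF fin k ivG ivv] by (simp only: of_nat_le_iff)
      also have "\<dots> = k * (k - 1) ^ n" unfolding k_def using k by (simp add: of_nat_diff)
      finally show "real (card (RWn G iv n)) * exp (- \<epsilon> * real n) \<le> k * (k - 1) ^ n * exp (- \<epsilon> * real n)"
        by (simp add: mult_right_mono)
    qed
    also have "\<dots> = k * (\<Sum>n<N. r ^ n)"
      unfolding r_def sum_distrib_left
      by (rule sum.cong) (auto simp: power_mult_distrib exp_of_nat_mult[symmetric] mult.commute)
    also have "\<dots> = k * ((1 - r ^ N) / (1 - r))" using r1 by (simp add: sum_gp_strict)
    also have "\<dots> \<le> k * (1 / (1 - r))"
      using r1 r0 k1 by (intro mult_left_mono divide_right_mono) auto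
    finally show "(\<Sum>u\<in>X. exp (- \<epsilon> * real (length u))) \<le> k * (1 / (1 - r))" .
  qed
qed simp



lemma cont_infsum_lemma:
  fixes w :: "'a \<Rightarrow> real" and c :: "'a \<Rightarrow> real \<Rightarrow> real"
  assumes ws: "w summable_on A" and w0: "\<And>u. u \<in> A \<Longrightarrow> w u \<ge> 0"
    and cc: "\<And>u. u \<in> A \<Longrightarrow> continuous_on UNIV (c u)"
    and cb: "\<And>u t. u \<in> A \<Longrightarrow> 0 \<le> c u t \<and> c u t \<le> 1"
  shows "continuous_on UNIV (\<lambda>t. infsum (\<lambda>u. w u * c u t) A)"
proof (rule uniform_limit_theorem[where F="finite_subsets_at_top A" and f="\<lambda>X t. sum (\<lambda>u. w u * c u t) X"])
  show "\<forall>\<^sub>F X in finite_subsets_at_top A. continuous_on UNIV (\<lambda>t. \<Sum>u\<in>X. w u * c u t)"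
    by (rule eventually_finite_subsets_at_top_weakI) (auto intro!: continuous_intros cc)
  show "finite_subsets_at_top A \<noteq> \<bottom>" by (rule finite_subsets_at_top_neq_bot)
  have sumc: "\<And>t B. B \<subseteq> A \<Longrightarrow> (\<lambda>u. w u * c u t) summable_on B"
  proof -
    fix t B assume B: "B \<subseteq> A"
    have "(\<lambda>u. w u * c u t) summable_on A"
      by (rule summable_on_comparison_test[OF ws]) (use w0 cb in \<open>auto intro: mult_left_le\<close>)
    thus "(\<lambda>u. w u * c u t) summable_on B" using B summable_on_subset_banach by blast
  qed
  show "uniform_limit UNIV (\<lambda>X t. \<Sum>u\<in>X. w u * c u t) (\<lambda>t. infsum (\<lambda>u. w u * c u t) A) (finite_subsets_at_top A)"
    unfolding uniform_limit_iff
  proof (intro allI impI)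
    fix e :: real assume e: "e > 0"
    have "\<forall>\<^sub>F X in finite_subsets_at_top A. dist (sum w X) (infsum w A) < e"
      using infsum_tendsto[OF ws] e by (rule tendstoD)
    moreover have "\<forall>\<^sub>F X in finite_subsets_at_top A. finite X \<and> X \<subseteq> A"
      by (rule eventually_finite_subsets_at_top_weakI) auto
    ultimately show "\<forall>\<^sub>F X in finite_subsets_at_top A. \<forall>t\<in>UNIV. dist (\<Sum>u\<in>X. w u * c u t) (infsum (\<lambda>u. w u * c u t) A) < e"
    proof eventually_elim
      case (elim X)
      show ?case
      proof
        fix t :: real
        have XA: "X \<subseteq> A" "finite X" using elim by auto
        have "infsum (\<lambda>u. w u * c u t) A - (\<Sum>u\<in>X. w u * c u t) = infsum (\<lambda>u. w u * c u t) (A - X)"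
          using infsum_Diff[OF sumc[OF order_refl] sumc[OF XA(1)] XA(1)] XA by simp
        also have "\<dots> \<le> infsum w (A - X)"
          by (rule infsum_mono[OF sumc summable_on_subset_banach[OF ws]]) (use cb w0 in \<open>auto intro: mult_left_le\<close>)
        also have "\<dots> = infsum w A - sum w X"
          using infsum_Diff[OF ws summable_on_subset_banach[OF ws XA(1)] XA(1)] XA by simp
        also have "\<dots> < e" using elim by (simp add: dist_real_def)
        finally have 1: "infsum (\<lambda>u. w u * c u t) A - (\<Sum>u\<in>X. w u * c u t) < e" .
        have "0 \<le> infsum (\<lambda>u. w u * c u t) (A - X)"
          by (rule infsum_nonneg) (use cb w0 in auto)
        hence "0 \<le> infsum (\<lambda>u. w u * c u t) A - (\<Sum>u\<in>X. w u * c u t)"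
          using infsum_Diff[OF sumc[OF order_refl] sumc[OF XA(1)] XA(1)] XA by simp
        with 1 show "dist (\<Sum>u\<in>X. w u * c u t) (infsum (\<lambda>u. w u * c u t) A) < e"
          by (simp add: dist_real_def)
      qed
    qed
  qed
qed



locale setting =
  fixes M :: "complex set" and D :: "real set" and p :: "real \<Rightarrow> complex" and \<theta> :: "complex \<Rightarrow> real"
    and Gens :: "(complex \<Rightarrow> complex) set" and \<epsilon> :: real
  assumes Dcases: "D = {0..1} \<or> (D = {0..<1} \<and> p 1 = p 0)"
    and pD: "p ` D = M" and p01: "p ` {0..1} = M" and p_cont: "continuous_on {0..1} p"
    and \<theta>p: "\<And>t. t \<in> D \<Longrightarrow> \<theta> (p t) = t"
    and \<theta>M: "\<And>z. z \<in> M \<Longrightarrow> \<theta> z \<in> D"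
    and p\<theta>: "\<And>z. z \<in> M \<Longrightarrow> p (\<theta> z) = z"
    and \<theta>_meas: "\<theta> \<in> borel_measurable borel"
    and fin: "finite Gens" and card2: "card Gens \<ge> 2"
    and homeo: "\<And>g. g \<in> Gens \<Longrightarrow> homeo_of M g"
    and invex: "\<And>g. g \<in> Gens \<Longrightarrow> \<exists>g'\<in>Gens. homeomorphism M M g g'"
    and eps: "\<epsilon> > ln (real (card Gens) - 1)"
begin

definition iv :: "(complex \<Rightarrow> complex) \<Rightarrow> (complex \<Rightarrow> complex)" where
  "iv g = (SOME g'. g' \<in> Gens \<and> homeomorphism M M g g')"

lemma iv_props: assumes "g \<in> Gens" shows "iv g \<in> Gens \<and> homeomorphism M M g (iv g)"
proof -
  obtain g' where "g' \<in> Gens" "homeomorphism M M g g'" using invex[OF assms] by blast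
  thus ?thesis unfolding iv_def using someI[of "\<lambda>g'. g' \<in> Gens \<and> homeomorphism M M g g'" g'] by blast
qed

lemma gen_out: "g \<in> Gens \<Longrightarrow> x \<notin> M \<Longrightarrow> g x = x"
  using homeo unfolding homeo_of_def by blast

lemma iv_left: "g \<in> Gens \<Longrightarrow> iv g (g x) = x"
proof -
  assume g: "g \<in> Gens"
  note h = iv_props[OF g]
  show ?thesis
  proof (cases "x \<in> M")
    case True thus ?thesis using h unfolding homeomorphism_def by blast
  next
    case False thus ?thesis using gen_out[OF g False] gen_out[of "iv g" x] h by simp
  qed
qed

lemma iv_right: "g \<in> Gens \<Longrightarrow> g (iv g x) = x"
proof -
  assume g: "g \<in> Gens"
  note h = iv_props[OF g]
  show ?thesis
  proof (cases "x \<in> M")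
    case True thus ?thesis using h unfolding homeomorphism_def by blast
  next
    case False thus ?thesis using gen_out[OF g False] gen_out[of "iv g" x] h by simp
  qed
qed

lemma iv_iv: "g \<in> Gens \<Longrightarrow> iv (iv g) = g"
proof
  fix x assume g: "g \<in> Gens"
  have ig: "iv g \<in> Gens" using iv_props[OF g] by blast
  have "iv (iv g) x = iv (iv g) (iv g (g x))" using iv_left[OF g] by simp
  also have "\<dots> = g x" using iv_left[OF ig] by simp
  finally show "iv (iv g) x = g x" .
qed

lemma gen_maps: "g \<in> Gens \<Longrightarrow> g ` M \<subseteq> M \<and> continuous_on M g"
  using iv_props unfolding homeomorphism_def by blast

definition evalw :: "(complex \<Rightarrow> complex) list \<Rightarrow> complex \<Rightarrow> complex" where
  "evalw u = foldr (\<circ>) u id"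

lemma evalw_simps [simp]: "evalw [] = id" "evalw (a # u) = a \<circ> evalw u"
  by (simp_all add: evalw_def)

lemma evalw_maps: "set u \<subseteq> Gens \<Longrightarrow> evalw u ` M \<subseteq> M \<and> continuous_on M (evalw u)"
proof (induction u)
  case Nil thus ?case by (simp add: continuous_on_id)
next
  case (Cons a u)
  hence a: "a \<in> Gens" and IH: "evalw u ` M \<subseteq> M \<and> continuous_on M (evalw u)" by auto
  have c: "continuous_on M (a \<circ> evalw u)"
    using continuous_on_compose[of M "evalw u" a] IH gen_maps[OF a] continuous_on_subset by blast
  show ?case using gen_maps[OF a] IH c
    by (auto simp: image_comp[symmetric])
qed

lemma evalw_inj: "set u \<subseteq> Gens \<Longrightarrow> inj (evalw u)"
proof (induction u)
  case Nil thus ?case by simp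
next
  case (Cons a u)
  hence a: "a \<in> Gens" by auto
  have "inj a" by (rule inj_on_inverseI[where g="iv a"]) (use iv_left[OF a] in auto)
  thus ?case using Cons inj_compose[of a "evalw u"] by (simp add: comp_def)
qed

abbreviation RR where "RR \<equiv> RW Gens iv"

lemma iv_in: "g \<in> Gens \<Longrightarrow> iv g \<in> Gens" using iv_props by blast

lemma red_ok_tl: "red_ok iv (a # u) \<Longrightarrow> red_ok iv u"
  by (cases u) auto

definition stp :: "(complex \<Rightarrow> complex) \<Rightarrow> (complex \<Rightarrow> complex) list \<Rightarrow> (complex \<Rightarrow> complex) list" where
  "stp a u = (case u of [] \<Rightarrow> [a] | b # v \<Rightarrow> if b = iv a then v else a # u)"

lemma stp_RR: "a \<in> Gens \<Longrightarrow> u \<in> RR \<Longrightarrow> stp a u \<in> RR"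
  unfolding stp_def RW_def by (cases u) (auto dest: red_ok_tl)

lemma stp_eval: "a \<in> Gens \<Longrightarrow> evalw (stp a u) = a \<circ> evalw u"
  unfolding stp_def by (cases u) (auto simp: iv_right)

lemma stp_len: "length (stp a u) \<le> Suc (length u)"
  unfolding stp_def by (cases u) auto

lemma stp_inj: "a \<in> Gens \<Longrightarrow> inj_on (stp a) RR"
proof
  fix u v assume a: "a \<in> Gens" and u: "u \<in> RR" and v: "v \<in> RR" and e: "stp a u = stp a v"
  have bad: False if "x \<in> RR" "x = iv a # a # y" for x y
    using that iv_iv[OF a] unfolding RW_def by auto
  show "u = v"
  proof (cases u)
    case Nil thus ?thesis using e bad[OF v] unfolding stp_def by (cases v) (auto split: if_splits)
  next
    case (Cons b u')
    thus ?thesis using e bad[OF u] bad[OF v] unfolding stp_def by (cases v) (auto split: if_splits)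
  qed
qed

end


context setting begin

definition w :: "(complex \<Rightarrow> complex) list \<Rightarrow> real" where
  "w u = exp (- \<epsilon> * real (length u))"

definition L :: "real measure" where "L = restrict_space lborel {0..1}"

definition \<phi> :: "(complex \<Rightarrow> complex) list \<Rightarrow> real \<Rightarrow> real" where
  "\<phi> u = (\<lambda>s. \<theta> (evalw u (p s)))"

definition \<nu> :: "(complex \<Rightarrow> complex) list \<Rightarrow> real measure" where
  "\<nu> u = distr L borel (\<phi> u)"

definition \<Phi> :: "real set \<Rightarrow> real" where
  "\<Phi> S = infsum (\<lambda>u. w u * measure (\<nu> u) S) RR"

definition W :: real where "W = infsum w RR"

lemma w_summable: "w summable_on RR"
  unfolding w_def by (rule RW_summable[OF fin card2 iv_in iv_iv eps]) auto

lemma w_pos: "w u > 0" unfolding w_def by simp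

lemma eps_pos: "\<epsilon> > 0"
proof -
  have "real (card Gens) - 1 \<ge> 1" using card2 by simp
  hence "ln (real (card Gens) - 1) \<ge> 0" by simp
  thus ?thesis using eps by linarith
qed

lemma RR_set: "u \<in> RR \<Longrightarrow> set u \<subseteq> Gens" unfolding RW_def by auto

lemma D01: "D \<subseteq> {0..1}" "{0..1} \<subseteq> insert 1 D" "{0..<1} \<subseteq> D"
  using Dcases by auto

lemma pM: "t \<in> {0..1} \<Longrightarrow> p t \<in> M" using p01 by blast

lemma phi_meas: "u \<in> RR \<Longrightarrow> \<phi> u \<in> borel_measurable L"
proof -
  assume u: "u \<in> RR"
  have c: "continuous_on {0..1} (evalw u \<circ> p)"
    using continuous_on_compose[OF p_cont, of "evalw u"] evalw_maps[OF RR_set[OF u]] p01 by simp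
  have "(evalw u \<circ> p) \<in> borel_measurable (restrict_space borel {0..1})"
    by (rule borel_measurable_continuous_on_restrict[OF c])
  hence m: "(evalw u \<circ> p) \<in> L \<rightarrow>\<^sub>M borel"
    unfolding L_def using measurable_cong_sets[OF sets_restrict_space_cong[OF sets_lborel] refl] by blast
  have "\<theta> \<circ> (evalw u \<circ> p) \<in> L \<rightarrow>\<^sub>M borel" by (rule measurable_comp[OF m \<theta>_meas])
  thus ?thesis unfolding \<phi>_def by (simp add: comp_def)
qed

lemma space_L: "space L = {0..1}" unfolding L_def by (simp add: space_restrict_space)

lemma prob_L: "prob_space L"
  unfolding L_def by (rule prob_space_restrict_space) auto

lemma prob_nu: "u \<in> RR \<Longrightarrow> prob_space (\<nu> u)"
  unfolding \<nu>_def by (rule prob_space.prob_space_distr[OF prob_L phi_meas])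

lemma nu_measure: "u \<in> RR \<Longrightarrow> S \<in> sets borel \<Longrightarrow> measure (\<nu> u) S = measure L (\<phi> u -` S \<inter> {0..1})"
  unfolding \<nu>_def using measure_distr[OF phi_meas] space_L by simp

lemma nu_bounds: "u \<in> RR \<Longrightarrow> 0 \<le> measure (\<nu> u) S \<and> measure (\<nu> u) S \<le> 1"
  using prob_space.prob_le_1[OF prob_nu] by auto

lemma phi_D: "u \<in> RR \<Longrightarrow> s \<in> {0..1} \<Longrightarrow> \<phi> u s \<in> D"
  unfolding \<phi>_def using evalw_maps[OF RR_set] pM \<theta>M by blast

lemma measure_L_lborel: "S \<subseteq> {0..1} \<Longrightarrow> measure L S = measure lborel S"
  unfolding L_def by (rule measure_restrict_space) auto

lemma phi_inj: "u \<in> RR \<Longrightarrow> inj_on (\<phi> u) D"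
proof
  fix s t assume u: "u \<in> RR" and s: "s \<in> D" and t: "t \<in> D" and e: "\<phi> u s = \<phi> u t"
  have ps: "p s \<in> M" "p t \<in> M" using s t pD by auto
  have "p (\<phi> u s) = evalw u (p s)" "p (\<phi> u t) = evalw u (p t)"
    unfolding \<phi>_def using p\<theta> evalw_maps[OF RR_set[OF u]] ps by auto
  hence "evalw u (p s) = evalw u (p t)" using e by simp
  hence "p s = p t" using evalw_inj[OF RR_set[OF u]] by (simp add: inj_def)
  thus "s = t" using \<theta>p s t by metis
qed

lemma nu_point: "u \<in> RR \<Longrightarrow> measure (\<nu> u) {x} = 0"
proof -
  assume u: "u \<in> RR"
  have "finite (\<phi> u -` {x} \<inter> D)" by (rule finite_vimage_IntI[OF _ phi_inj[OF u]]) simp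
  moreover have "\<phi> u -` {x} \<inter> {0..1} \<subseteq> insert 1 (\<phi> u -` {x} \<inter> D)" using D01 by auto
  ultimately have fin: "finite (\<phi> u -` {x} \<inter> {0..1})" by (meson finite_insert finite_subset)
  have "measure (\<nu> u) {x} = measure lborel (\<phi> u -` {x} \<inter> {0..1})"
    using nu_measure[OF u] measure_L_lborel by simp
  also have "\<dots> = 0" using emeasure_lborel_countable[OF countable_finite[OF fin]]
    by (simp add: measure_def)
  finally show ?thesis .
qed

lemma term_nonneg: "u \<in> RR \<Longrightarrow> 0 \<le> w u * measure (\<nu> u) S"
  using w_pos[of u] by simp

lemma term_summable: "B \<subseteq> RR \<Longrightarrow> (\<lambda>u. w u * measure (\<nu> u) S) summable_on B"
proof -
  assume B: "B \<subseteq> RR"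
  have "(\<lambda>u. w u * measure (\<nu> u) S) summable_on RR"
    by (rule summable_on_comparison_test[OF w_summable])
       (use nu_bounds w_pos term_nonneg in \<open>auto intro: mult_left_le less_imp_le\<close>)
  thus ?thesis using B summable_on_subset_banach by blast
qed

lemma Phi_nonneg: "\<Phi> S \<ge> 0"
  unfolding \<Phi>_def by (rule infsum_nonneg) (use term_nonneg in auto)

lemma Phi_mono: "S \<subseteq> T \<Longrightarrow> T \<in> sets borel \<Longrightarrow> \<Phi> S \<le> \<Phi> T"
  unfolding \<Phi>_def
proof (rule infsum_mono[OF term_summable term_summable])
  fix u assume u: "u \<in> RR" and ST: "S \<subseteq> T" "T \<in> sets borel"
  have "measure (\<nu> u) S \<le> measure (\<nu> u) T"
    by (rule finite_measure.finite_measure_mono[OF prob_space.finite_measure[OF prob_nu[OF u]] ST(1)])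
       (use ST(2) in \<open>simp add: \<nu>_def\<close>)
  thus "w u * measure (\<nu> u) S \<le> w u * measure (\<nu> u) T" using w_pos[of u] by simp
qed auto

lemma sets_nu: "u \<in> RR \<Longrightarrow> sets (\<nu> u) = sets borel" by (simp add: \<nu>_def)

lemma fm_nu: "u \<in> RR \<Longrightarrow> finite_measure (\<nu> u)"
  by (rule prob_space.finite_measure[OF prob_nu])

lemma Phi_add: "S \<in> sets borel \<Longrightarrow> T \<in> sets borel \<Longrightarrow> S \<inter> T = {} \<Longrightarrow> \<Phi> (S \<union> T) = \<Phi> S + \<Phi> T"
proof -
  assume ST: "S \<in> sets borel" "T \<in> sets borel" "S \<inter> T = {}"
  have "\<Phi> (S \<union> T) = infsum (\<lambda>u. w u * measure (\<nu> u) S + w u * measure (\<nu> u) T) RR"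
    unfolding \<Phi>_def
  proof (rule infsum_cong)
    fix u assume u: "u \<in> RR"
    have "measure (\<nu> u) (S \<union> T) = measure (\<nu> u) S + measure (\<nu> u) T"
      by (rule finite_measure.finite_measure_Union[OF fm_nu[OF u]]) (use ST sets_nu[OF u] in auto)
    thus "w u * measure (\<nu> u) (S \<union> T) = w u * measure (\<nu> u) S + w u * measure (\<nu> u) T"
      by (simp add: distrib_left)
  qed
  also have "\<dots> = \<Phi> S + \<Phi> T" unfolding \<Phi>_def
    by (rule infsum_add[OF term_summable term_summable]) auto
  finally show ?thesis .
qed

lemma Phi_point: "\<Phi> {x} = 0"
  unfolding \<Phi>_def by (rule infsum_0) (simp add: nu_point)

lemma Phi_UNIV: "\<Phi> UNIV = W"
  unfolding \<Phi>_def W_def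
proof (rule infsum_cong)
  fix u assume u: "u \<in> RR"
  have "measure (\<nu> u) (space (\<nu> u)) = 1" using prob_space.prob_space[OF prob_nu[OF u]] .
  moreover have "space (\<nu> u) = UNIV" by (simp add: \<nu>_def)
  ultimately show "w u * measure (\<nu> u) UNIV = w u" by simp
qed

lemma Phi_compl: "S \<in> sets borel \<Longrightarrow> \<Phi> (- S) = W - \<Phi> S"
  using Phi_add[of S "- S"] Phi_UNIV by (simp add: Un_commute)

lemma D_borel: "D \<in> sets borel" using Dcases by auto

lemma Phi_outD: "\<Phi> (- D) = 0"
  unfolding \<Phi>_def
proof (rule infsum_0)
  fix u assume u: "u \<in> RR"
  have "\<phi> u -` (- D) \<inter> {0..1} = {}" using phi_D[OF u] by auto
  thus "w u * measure (\<nu> u) (- D) = 0" using nu_measure[OF u, of "- D"] D_borel by simp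
qed

lemma Phi_zero: "S \<in> sets borel \<Longrightarrow> S \<inter> D = {} \<Longrightarrow> \<Phi> S = 0"
  using Phi_mono[of S "- D"] Phi_outD Phi_nonneg[of S] D_borel by fastforce

lemma nil_RR: "[] \<in> RR" unfolding RW_def by simp

lemma Phi_lower: "0 \<le> a \<Longrightarrow> a \<le> b \<Longrightarrow> b \<le> 1 \<Longrightarrow> b - a \<le> \<Phi> {a<..<b}"
proof -
  assume ab: "0 \<le> a" "a \<le> b" "b \<le> 1"
  let ?I = "{a<..<b}"
  have sub: "?I \<subseteq> \<phi> [] -` ?I \<inter> space L"
  proof
    fix s assume s: "s \<in> ?I"
    hence "s \<in> D" using D01 ab by auto
    hence "\<phi> [] s = s" unfolding \<phi>_def using \<theta>p by simp
    thus "s \<in> \<phi> [] -` ?I \<inter> space L" using s ab space_L by auto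
  qed
  have "b - a = measure lborel ?I" using ab by simp
  also have "\<dots> = measure L ?I" using ab by (intro measure_L_lborel[symmetric]) auto
  also have "\<dots> \<le> measure L (\<phi> [] -` ?I \<inter> space L)"
    by (rule finite_measure.finite_measure_mono[OF prob_space.finite_measure[OF prob_L] sub])
       (rule measurable_sets[OF phi_meas[OF nil_RR]], simp)
  also have "\<dots> = w [] * measure (\<nu> []) ?I"
    using nu_measure[OF nil_RR, of ?I] space_L by (simp add: w_def)
  also have "\<dots> = infsum (\<lambda>u. w u * measure (\<nu> u) ?I) {[]}" by simp
  also have "\<dots> \<le> \<Phi> ?I" unfolding \<Phi>_def
    by (rule infsum_mono_neutral[OF _ term_summable]) (use nil_RR term_nonneg in auto)
  finally show ?thesis .
qed

lemma Phi_key: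
  assumes g: "g \<in> Gens" and T: "T \<in> sets borel" and S: "S \<in> sets borel" and SD: "S \<subseteq> D"
    and img: "p ` T \<subseteq> g ` p ` S"
  shows "\<Phi> T \<le> exp \<epsilon> * \<Phi> S"
proof -
  define a where "a = iv g"
  have a: "a \<in> Gens" unfolding a_def by (rule iv_in[OF g])
  define f where "f = (\<lambda>u. w u * measure (\<nu> u) S)"
  have st1: "measure (\<nu> u) T \<le> measure (\<nu> (stp a u)) S" if u: "u \<in> RR" for u
  proof -
    have su: "stp a u \<in> RR" by (rule stp_RR[OF a u])
    have "\<phi> u -` T \<inter> space L \<subseteq> \<phi> (stp a u) -` S \<inter> space L"
    proof
      fix s assume s: "s \<in> \<phi> u -` T \<inter> space L"
      hence s01: "s \<in> {0..1}" using space_L by auto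
      have eM: "evalw u (p s) \<in> M" using evalw_maps[OF RR_set[OF u]] pM[OF s01] by blast
      have "p (\<phi> u s) \<in> p ` T" using s by auto
      then obtain \<sigma> where \<sigma>: "\<sigma> \<in> S" "p (\<phi> u s) = g (p \<sigma>)" using img by blast
      have "p (\<phi> u s) = evalw u (p s)" unfolding \<phi>_def using p\<theta>[OF eM] .
      hence "evalw (stp a u) (p s) = a (g (p \<sigma>))" using stp_eval[OF a] \<sigma> by simp
      also have "\<dots> = p \<sigma>" unfolding a_def by (rule iv_left[OF g])
      finally have "\<phi> (stp a u) s = \<sigma>" unfolding \<phi>_def using \<theta>p \<sigma>(1) SD by auto
      thus "s \<in> \<phi> (stp a u) -` S \<inter> space L" using \<sigma>(1) s by auto
    qed
    hence "measure L (\<phi> u -` T \<inter> space L) \<le> measure L (\<phi> (stp a u) -` S \<inter> space L)"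
      by (rule finite_measure.finite_measure_mono[OF prob_space.finite_measure[OF prob_L]])
         (rule measurable_sets[OF phi_meas[OF su] S])
    thus ?thesis using nu_measure[OF u T] nu_measure[OF su S] space_L by simp
  qed
  have st2: "w u \<le> exp \<epsilon> * w (stp a u)" for u
  proof -
    have "real (length (stp a u)) \<le> real (length u) + 1" using stp_len[of a u] by simp
    hence "\<epsilon> * real (length (stp a u)) \<le> \<epsilon> * (real (length u) + 1)"
      using eps_pos by (intro mult_left_mono) auto
    hence "- \<epsilon> * real (length u) \<le> \<epsilon> + - \<epsilon> * real (length (stp a u))" by (simp add: algebra_simps)
    hence "exp (- \<epsilon> * real (length u)) \<le> exp (\<epsilon> + - \<epsilon> * real (length (stp a u)))" by (simp only: exp_le_cancel_iff)
    also have "\<dots> = exp \<epsilon> * exp (- \<epsilon> * real (length (stp a u)))" by (rule exp_add)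
    finally show ?thesis unfolding w_def .
  qed
  have inj: "inj_on (stp a) RR" by (rule stp_inj[OF a])
  have imgRR: "stp a ` RR \<subseteq> RR" using stp_RR[OF a] by blast
  have fs: "f summable_on (stp a ` RR)" unfolding f_def by (rule term_summable[OF imgRR])
  have fcs: "(f \<circ> stp a) summable_on RR" using summable_on_reindex[OF inj] fs by blast
  have "\<Phi> T \<le> infsum (\<lambda>u. exp \<epsilon> * (f \<circ> stp a) u) RR" unfolding \<Phi>_def
  proof (rule infsum_mono[OF term_summable summable_on_cmult_right[OF fcs]])
    fix u assume u: "u \<in> RR"
    have "w u * measure (\<nu> u) T \<le> (exp \<epsilon> * w (stp a u)) * measure (\<nu> (stp a u)) S"
      using st1[OF u] st2[of u] nu_bounds[OF u] nu_bounds[OF stp_RR[OF a u]] w_pos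
      by (intro mult_mono) (auto intro: less_imp_le)
    thus "w u * measure (\<nu> u) T \<le> exp \<epsilon> * (f \<circ> stp a) u" unfolding f_def by simp
  qed simp
  also have "\<dots> = exp \<epsilon> * infsum (f \<circ> stp a) RR" by (rule infsum_cmult_right) (use fcs in \<open>simp add: comp_def\<close>)
  also have "infsum (f \<circ> stp a) RR = infsum f (stp a ` RR)" by (rule infsum_reindex[OF inj, symmetric])
  also have "\<dots> \<le> infsum f RR"
    by (rule infsum_mono2[OF fs _ imgRR]) (use term_summable term_nonneg in \<open>auto simp: f_def\<close>)
  finally show ?thesis unfolding \<Phi>_def f_def by (simp add: mult_left_mono)
qed

end


context setting begin

definition F :: "real \<Rightarrow> real" where "F t = \<Phi> {..t}"
definition H :: "real \<Rightarrow> real" where "H t = F t / W"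

lemma F_cont: "continuous_on UNIV F"
proof -
  have eq: "F = (\<lambda>t. infsum (\<lambda>u. w u * cdf (\<nu> u) t) RR)"
    unfolding F_def \<Phi>_def by (simp add: cdf_def2)
  show ?thesis unfolding eq
  proof (rule cont_infsum_lemma[OF w_summable])
    fix u assume u: "u \<in> RR"
    interpret fb: finite_borel_measure "\<nu> u"
      by (rule finite_borel_measure.intro[OF fm_nu[OF u]]) (rule finite_borel_measure_axioms.intro[OF sets_nu[OF u]])
    show "continuous_on UNIV (cdf (\<nu> u))"
      by (rule continuous_at_imp_continuous_on) (use fb.isCont_cdf nu_point[OF u] in auto)
    fix t show "0 \<le> cdf (\<nu> u) t \<and> cdf (\<nu> u) t \<le> 1" unfolding cdf_def2 using nu_bounds[OF u] by auto
  qed (use w_pos in \<open>auto intro: less_imp_le\<close>)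
qed

lemma Phi_empty: "\<Phi> {} = 0" using Phi_mono[of "{}" "{0}"] Phi_point Phi_nonneg[of "{}"] by simp

lemma F_neg: "t < 0 \<Longrightarrow> F t = 0"
  unfolding F_def by (rule Phi_zero) (use D01 in auto)

lemma F0: "F 0 = 0"
proof -
  have "{..0::real} = {..<0} \<union> {0}" by auto
  hence "F 0 = \<Phi> {..<0} + \<Phi> {0}" unfolding F_def using Phi_add[of "{..<0}" "{0}"] by simp
  moreover have "\<Phi> {..<0} = 0" by (rule Phi_zero) (use D01 in auto)
  ultimately show ?thesis using Phi_point by simp
qed

lemma F1: "F 1 = W"
proof -
  have "\<Phi> (- {..1}) = 0" by (rule Phi_zero) (use D01 in auto)
  thus ?thesis unfolding F_def using Phi_compl[of "{..1}"] by simp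
qed

lemma F_split: "a \<le> b \<Longrightarrow> F b = F a + \<Phi> {a<..b}"
proof -
  assume "a \<le> b"
  hence "{..b} = {..a} \<union> {a<..b}" by auto
  moreover have "\<Phi> ({..a} \<union> {a<..b}) = \<Phi> {..a} + \<Phi> {a<..b}" by (rule Phi_add) auto
  ultimately show ?thesis unfolding F_def by simp
qed

lemma Phi_Icc: "a \<le> b \<Longrightarrow> \<Phi> {a..b} = F b - F a"
proof -
  assume ab: "a \<le> b"
  hence "{a..b} = {a} \<union> {a<..b}" by auto
  hence "\<Phi> {a..b} = \<Phi> {a} + \<Phi> {a<..b}" using Phi_add[of "{a}" "{a<..b}"] by simp
  thus ?thesis using F_split[OF ab] Phi_point by simp
qed

lemma Phi_Ioo: "a \<le> b \<Longrightarrow> \<Phi> {a<..<b} = F b - F a"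
proof (cases "a = b")
  case True thus ?thesis using Phi_empty by simp
next
  case False
  assume ab: "a \<le> b"
  hence "{a<..b} = {a<..<b} \<union> {b}" using False by auto
  hence "\<Phi> {a<..b} = \<Phi> {a<..<b} + \<Phi> {b}" using Phi_add[of "{a<..<b}" "{b}"] by simp
  thus ?thesis using F_split[OF ab] Phi_point by simp
qed

lemma F_strict: "0 \<le> a \<Longrightarrow> a \<le> b \<Longrightarrow> b \<le> 1 \<Longrightarrow> F a + (b - a) \<le> F b"
  using Phi_Ioo[of a b] Phi_lower[of a b] by simp

lemma W_ge1: "W \<ge> 1" using F_strict[of 0 1] F0 F1 by simp

lemma H0: "H 0 = 0" unfolding H_def using F0 by simp
lemma H1: "H 1 = 1" unfolding H_def using F1 W_ge1 by simp

lemma W_nz: "W \<noteq> 0" using W_ge1 by simp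

lemma H_cont: "continuous_on A H"
  unfolding H_def by (intro continuous_intros continuous_on_subset[OF F_cont]) (use W_nz in auto)

lemma H_strict: "0 \<le> a \<Longrightarrow> a < b \<Longrightarrow> b \<le> 1 \<Longrightarrow> H a < H b"
  unfolding H_def using F_strict[of a b] W_ge1 by (simp add: divide_strict_right_mono)

lemma H_mono: "0 \<le> a \<Longrightarrow> a \<le> b \<Longrightarrow> b \<le> 1 \<Longrightarrow> H a \<le> H b"
  using H_strict[of a b] by (cases "a = b") auto

lemma H_inj: "inj_on H {0..1}"
proof
  fix x y assume "x \<in> {0..1}" "y \<in> {0..1}" "H x = H y"
  thus "x = y" using H_strict[of x y] H_strict[of y x] by (cases x y rule: linorder_cases) auto
qed

lemma H_01: "H ` {0..1} = {0..1}"
proof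
  show "H ` {0..1} \<subseteq> {0..1}" using H_mono[of 0] H_mono[of _ 1] H0 H1 by fastforce
  show "{0..1} \<subseteq> H ` {0..1}"
  proof
    fix y :: real assume y: "y \<in> {0..1}"
    obtain x where "0 \<le> x" "x \<le> 1" "H x = y" using IVT'[of H 0 y 1] H0 H1 y H_cont by auto
    thus "y \<in> H ` {0..1}" by auto
  qed
qed

lemma H_01': "H ` {0..<1} = {0..<1}"
proof
  show "H ` {0..<1} \<subseteq> {0..<1}" using H_mono[of 0] H_strict[of _ 1] H0 H1 by fastforce
  show "{0..<1} \<subseteq> H ` {0..<1}"
  proof
    fix y :: real assume y: "y \<in> {0..<1}"
    hence "y \<in> H ` {0..1}" using H_01 by auto
    then obtain x where "x \<in> {0..1}" "H x = y" by auto
    moreover hence "x \<noteq> 1" using H1 y by auto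
    ultimately show "y \<in> H ` {0..<1}" by auto
  qed
qed

lemma H_D: "H ` D = D" using Dcases H_01 H_01' by auto

lemma Phi_seg: "a \<le> b \<Longrightarrow> \<Phi> {a..b} = W * (H b - H a)"
  unfolding H_def using Phi_Icc[of a b] W_nz by (simp add: diff_divide_distrib[symmetric])

definition hh :: "complex \<Rightarrow> complex" where "hh z = p (H (\<theta> z))"

lemma hh_p: "t \<in> {0..1} \<Longrightarrow> hh (p t) = p (H t)"
proof (cases "t \<in> D")
  case True thus ?thesis unfolding hh_def using \<theta>p by simp
next
  case False
  assume t: "t \<in> {0..1}"
  hence "t = 1" "D = {0..<1}" "p 1 = p 0" using False Dcases by auto
  moreover have "0 \<in> D" using D01 by auto
  ultimately show ?thesis unfolding hh_def using \<theta>p[of 0] H0 H1 by simp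
qed

lemma M_compact: "compact M"
  using compact_continuous_image[OF p_cont compact_Icc[of 0 1]] p01 by simp

lemma pH_cont: "continuous_on {0..1} (\<lambda>t. p (H t))"
  using continuous_on_compose[OF H_cont, of "{0..1}" p] p_cont H_01 by (simp add: comp_def)

lemma hh_cont: "continuous_on M hh"
proof (subst continuous_on_closed_vimage[OF compact_imp_closed[OF M_compact]], intro allI impI)
  fix B :: "complex set" assume B: "closed B"
  have eq: "hh -` B \<inter> M = p ` ((\<lambda>t. p (H t)) -` B \<inter> {0..1})"
  proof
    show "hh -` B \<inter> M \<subseteq> p ` ((\<lambda>t. p (H t)) -` B \<inter> {0..1})"
    proof
      fix z assume z: "z \<in> hh -` B \<inter> M"
      then obtain t where t: "t \<in> {0..1}" "z = p t" using p01 by auto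
      thus "z \<in> p ` ((\<lambda>t. p (H t)) -` B \<inter> {0..1})" using z hh_p[OF t(1)] by auto
    qed
    show "p ` ((\<lambda>t. p (H t)) -` B \<inter> {0..1}) \<subseteq> hh -` B \<inter> M"
      using hh_p p01 by auto
  qed
  have "closed ((\<lambda>t. p (H t)) -` B \<inter> {0..1})"
    using continuous_on_closed_vimage[of "{0..1}" "\<lambda>t. p (H t)"] pH_cont B by simp
  moreover have "bounded ((\<lambda>t. p (H t)) -` B \<inter> {0..1})"
    by (rule bounded_subset[OF compact_imp_bounded[OF compact_Icc[of 0 1]]]) auto
  ultimately have "compact ((\<lambda>t. p (H t)) -` B \<inter> {0..1})"
    using compact_eq_bounded_closed by blast
  hence "compact (p ` ((\<lambda>t. p (H t)) -` B \<inter> {0..1}))"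
    using compact_continuous_image[OF continuous_on_subset[OF p_cont, of "(\<lambda>t. p (H t)) -` B \<inter> {0..1}"]] by auto
  thus "closed (hh -` B \<inter> M)" unfolding eq by (rule compact_imp_closed)
qed

lemma hh_img: "hh ` M = M"
proof -
  have "hh ` M = hh ` p ` D" using pD by simp
  also have "\<dots> = (\<lambda>t. p (H t)) ` D" unfolding image_image by (rule image_cong) (use hh_p D01 in auto)
  also have "\<dots> = p ` H ` D" by (simp add: image_image)
  also have "\<dots> = M" using H_D pD by simp
  finally show ?thesis .
qed

lemma hh_inj: "inj_on hh M"
proof
  fix x y assume x: "x \<in> M" and y: "y \<in> M" and e: "hh x = hh y"
  obtain s s' where s: "s \<in> D" "x = p s" and s': "s' \<in> D" "y = p s'" using x y pD by auto
  have "s \<in> {0..1}" "s' \<in> {0..1}" using D01 s s' by auto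
  hence "p (H s) = p (H s')" using e hh_p s s' by metis
  moreover have "H s \<in> D" "H s' \<in> D" using H_D s s' by auto
  ultimately have "H s = H s'" using \<theta>p by metis
  hence "s = s'" using H_inj D01 s s' by (auto simp: inj_on_def)
  thus "x = y" using s s' by simp
qed

lemma hh_homeo: "\<exists>h'. homeomorphism M M hh h'"
  by (rule homeomorphism_compact[OF M_compact hh_cont hh_img hh_inj])

lemma reduce:
  assumes hom: "homeomorphism M M hh h'" and g: "g \<in> Gens" and x: "x \<in> M"
  shows "\<exists>s\<in>D. x = p (H s) \<and> \<theta> (g (p s)) \<in> D \<and> p (\<theta> (g (p s))) = g (p s)
            \<and> hh (g (h' x)) = p (H (\<theta> (g (p s))))"
proof -
  obtain z where z: "z \<in> M" "x = hh z" using x hh_img by auto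
  define s where "s = \<theta> z"
  have sD: "s \<in> D" and zs: "z = p s" unfolding s_def using \<theta>M p\<theta> z by auto
  have xs: "x = p (H s)" using z zs hh_p D01 sD by auto
  have h'x: "h' x = p s" using hom z zs unfolding homeomorphism_def by auto
  have gM: "g (p s) \<in> M" using gen_maps[OF g] zs z by auto
  have aD: "\<theta> (g (p s)) \<in> D" using \<theta>M[OF gM] .
  have pa: "p (\<theta> (g (p s))) = g (p s)" using p\<theta>[OF gM] .
  have "hh (g (h' x)) = hh (p (\<theta> (g (p s))))" using h'x pa by simp
  also have "\<dots> = p (H (\<theta> (g (p s))))" using hh_p aD D01 by auto
  finally show ?thesis using sD xs aD pa by blast
qed

end


context setting begin

lemma seg_bound:
  assumes g: "g \<in> Gens" and lh: "lo \<le> hi" and ab: "a \<le> b" and D1: "{lo..hi} \<subseteq> D"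
    and img: "p ` {a..b} \<subseteq> g ` p ` {lo..hi}"
  shows "H b - H a \<le> exp \<epsilon> * (H hi - H lo)"
proof -
  have "\<Phi> {a..b} \<le> exp \<epsilon> * \<Phi> {lo..hi}" by (rule Phi_key[OF g _ _ D1 img]) auto
  hence "W * (H b - H a) \<le> W * (exp \<epsilon> * (H hi - H lo))" using Phi_seg[OF lh] Phi_seg[OF ab]
    by (simp add: mult.left_commute)
  moreover have "W > 0" using W_ge1 by simp
  ultimately show ?thesis by (simp add: mult_le_cancel_left_pos)
qed

lemma conn_img: "g \<in> Gens \<Longrightarrow> {lo..hi} \<subseteq> {0..1} \<Longrightarrow> connected (g ` p ` {lo..hi})"
proof -
  assume g: "g \<in> Gens" and sub: "{lo..hi} \<subseteq> {0..1}"
  have c1: "connected (p ` {lo..hi})"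
    by (rule connected_continuous_image[OF continuous_on_subset[OF p_cont sub]]) simp
  have "p ` {lo..hi} \<subseteq> M" using sub p01 by auto
  thus ?thesis using connected_continuous_image[OF continuous_on_subset c1] gen_maps[OF g] by blast
qed

end

lemma interval_case:
  fixes Gens :: "(complex \<Rightarrow> complex) set" and \<epsilon> :: real
  assumes "finite Gens" and "card Gens \<ge> 2"
    and "\<forall>g\<in>Gens. homeo_of unit_interval_c g"
    and "\<forall>g\<in>Gens. \<exists>g'\<in>Gens. homeomorphism unit_interval_c unit_interval_c g g'"
    and "\<epsilon> > ln (real (card Gens) - 1)"
  shows "\<exists>h h'. homeomorphism unit_interval_c unit_interval_c h h' \<and>
           (\<forall>g\<in>Gens. lipschitz_wrt unit_interval_c (\<lambda>z w. dist z w) (exp \<epsilon>) (h \<circ> g \<circ> h'))"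
proof -
  let ?M = "unit_interval_c"
  interpret S: setting ?M "{0..1}" complex_of_real Re Gens \<epsilon>
  proof
    show "Re \<in> borel_measurable borel" by (intro borel_measurable_continuous_onI continuous_intros)
    show "continuous_on {0..1} complex_of_real" by (intro continuous_intros)
  qed (use assms in \<open>auto simp: unit_interval_c_def\<close>)
  obtain h' where hom: "homeomorphism ?M ?M S.hh h'" using S.hh_homeo by blast
  have dof: "dist (complex_of_real a) (complex_of_real b) = \<bar>a - b\<bar>" for a b
    by (simp add: dist_norm flip: of_real_diff)
  have conn: "of_real ` {a..b} \<subseteq> C" if C: "C \<subseteq> ?M" "connected C" "complex_of_real a \<in> C" "complex_of_real b \<in> C" for C a b
  proof
    fix z assume "z \<in> complex_of_real ` {a..b}"
    then obtain t where t: "t \<in> {a..b}" "z = of_real t" by auto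
    have "connected (Re ` C)" by (rule connected_continuous_image[OF _ C(2)]) (intro continuous_intros)
    moreover have "a \<in> Re ` C" "b \<in> Re ` C" using C(3,4) by force+
    ultimately have "t \<in> Re ` C" using connected_contains_Icc t(1) by blast
    then obtain y where y: "y \<in> C" "Re y = t" by auto
    have "y = of_real (Re y)" using y C(1) unfolding unit_interval_c_def by auto
    thus "z \<in> C" using y t by simp
  qed
  have "lipschitz_wrt ?M (\<lambda>z w. dist z w) (exp \<epsilon>) (S.hh \<circ> g \<circ> h')" if g: "g \<in> Gens" for g
    unfolding lipschitz_wrt_def
  proof (intro ballI)
    fix x y assume x: "x \<in> ?M" and y: "y \<in> ?M"
    obtain s where s: "s \<in> {0..1}" "x = of_real (S.H s)" "Re (g (of_real s)) \<in> {0..1}"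
        "of_real (Re (g (of_real s))) = g (of_real s)" "S.hh (g (h' x)) = of_real (S.H (Re (g (of_real s))))"
      using S.reduce[OF hom g x] by blast
    obtain s' where s': "s' \<in> {0..1}" "y = of_real (S.H s')" "Re (g (of_real s')) \<in> {0..1}"
        "of_real (Re (g (of_real s'))) = g (of_real s')" "S.hh (g (h' y)) = of_real (S.H (Re (g (of_real s'))))"
      using S.reduce[OF hom g y] by blast
    define \<alpha> where "\<alpha> = Re (g (of_real s))"
    define \<beta> where "\<beta> = Re (g (of_real s'))"
    define lo where "lo = min s s'"
    define hi where "hi = max s s'"
    define a where "a = min \<alpha> \<beta>"
    define b where "b = max \<alpha> \<beta>"
    have lh: "lo \<le> hi" "{lo..hi} \<subseteq> {0..1}" unfolding lo_def hi_def using s s' by auto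
    have ab: "a \<le> b" unfolding a_def b_def by simp
    let ?C = "g ` complex_of_real ` {lo..hi}"
    have C: "?C \<subseteq> ?M" "connected ?C" "of_real a \<in> ?C" "of_real b \<in> ?C"
    proof -
      show "?C \<subseteq> ?M" using S.gen_maps[OF g] lh unfolding unit_interval_c_def by auto
      show "connected ?C" by (rule S.conn_img[OF g lh(2)])
      have "of_real \<alpha> \<in> ?C" "of_real \<beta> \<in> ?C" using s(4) s'(4) unfolding \<alpha>_def \<beta>_def lo_def hi_def
        by (metis atLeastAtMost_iff image_eqI max.cobounded1 max.cobounded2 min.cobounded1 min.cobounded2)+
      thus "of_real a \<in> ?C" "of_real b \<in> ?C" unfolding a_def b_def by (auto simp: min_def max_def)
    qed
    have bound: "S.H b - S.H a \<le> exp \<epsilon> * (S.H hi - S.H lo)"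
      by (rule S.seg_bound[OF g lh(1) ab lh(2) conn[OF C]])
    have "dist ((S.hh \<circ> g \<circ> h') x) ((S.hh \<circ> g \<circ> h') y) = \<bar>S.H \<alpha> - S.H \<beta>\<bar>"
      using s(5) s'(5) unfolding \<alpha>_def \<beta>_def by (simp add: dof dist_real_def)
    also have "\<dots> = S.H b - S.H a" unfolding a_def b_def
      using S.H_mono[of \<alpha> \<beta>] S.H_mono[of \<beta> \<alpha>] s(3) s'(3) unfolding \<alpha>_def \<beta>_def by (auto simp: min_def max_def)
    also have "\<dots> \<le> exp \<epsilon> * (S.H hi - S.H lo)" by (rule bound)
    also have "S.H hi - S.H lo = \<bar>S.H s - S.H s'\<bar>" unfolding lo_def hi_def
      using S.H_mono[of s s'] S.H_mono[of s' s] s(1) s'(1) by (auto simp: min_def max_def)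
    also have "\<dots> = dist x y" using s(2) s'(2) by (simp add: dof dist_real_def)
    finally show "dist ((S.hh \<circ> g \<circ> h') x) ((S.hh \<circ> g \<circ> h') y) \<le> exp \<epsilon> * dist x y" .
  qed
  thus ?thesis using hom by blast
qed



definition pc :: "real \<Rightarrow> complex" where "pc t = cis (2 * pi * t)"
definition \<theta>c :: "complex \<Rightarrow> real" where
  "\<theta>c z = (if Arg z < 0 then Arg z / (2 * pi) + 1 else Arg z / (2 * pi))"

lemma Arg_meas: "Arg \<in> borel_measurable borel"
proof -
  have c: "(\<lambda>z. indicator (- \<real>\<^sub>\<le>\<^sub>0) z *\<^sub>R Arg z) \<in> borel_measurable borel"
    by (rule borel_measurable_continuous_on_indicator)
       (auto intro!: borel_open continuous_on_Arg simp: open_Compl closed_nonpos_Reals_complex)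
  have c2: "(\<lambda>z::complex. if z = 0 then 0 else pi) \<in> borel_measurable borel" by measurable
  have m: "(\<lambda>z. if z \<in> \<real>\<^sub>\<le>\<^sub>0 then (if z = 0 then 0 else pi) else indicator (- \<real>\<^sub>\<le>\<^sub>0) z *\<^sub>R Arg z) \<in> borel_measurable borel"
    by (rule measurable_If_set[OF c2 c]) (auto intro!: borel_closed closed_nonpos_Reals_complex)
  have "(\<lambda>z. if z \<in> \<real>\<^sub>\<le>\<^sub>0 then (if z = 0 then 0 else pi) else indicator (- \<real>\<^sub>\<le>\<^sub>0) z *\<^sub>R Arg z) = Arg"
  proof
    fix z :: complex
    show "(if z \<in> \<real>\<^sub>\<le>\<^sub>0 then (if z = 0 then 0 else pi) else indicator (- \<real>\<^sub>\<le>\<^sub>0) z *\<^sub>R Arg z) = Arg z"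
    proof (cases "z \<in> \<real>\<^sub>\<le>\<^sub>0")
      case True
      then obtain r where r: "z = of_real r" "r \<le> 0" unfolding nonpos_Reals_def by auto
      show ?thesis using True r Arg_of_real[of r] by auto
    qed auto
  qed
  thus ?thesis using m by simp
qed

lemma theta_meas: "\<theta>c \<in> borel_measurable borel"
  unfolding \<theta>c_def using Arg_meas by measurable

lemma pc_norm: "norm (pc t) = 1" unfolding pc_def by simp

lemma pc_shift: "pc (t + 1) = pc t"
proof -
  have "pc (t + 1) = cis (2 * pi * t) * cis (2 * pi)" unfolding pc_def cis_mult by (simp add: algebra_simps)
  thus ?thesis unfolding pc_def by simp
qed

lemma Arg_range: "- pi < Arg z" "Arg z \<le> pi" using mpi_less_Arg Arg_le_pi by auto

lemma theta_pc: "t \<in> {0..<1} \<Longrightarrow> \<theta>c (pc t) = t"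
proof -
  assume t: "t \<in> {0..<1}"
  show ?thesis
  proof (cases "t \<le> 1/2")
    case True
    have "0 \<le> 2 * pi * t" using t by simp
    moreover have "2 * pi * t \<le> 2 * pi * (1/2)" using True by (intro mult_left_mono) auto
    ultimately have rng: "2 * pi * t \<in> {-pi<..pi}" using pi_gt_zero unfolding greaterThanAtMost_iff by linarith
    have A: "Arg (pc t) = 2 * pi * t" unfolding pc_def by (rule Arg_cis[OF rng])
    hence "\<not> Arg (pc t) < 0" using \<open>0 \<le> 2 * pi * t\<close> by linarith
    thus ?thesis unfolding \<theta>c_def using A by simp
  next
    case False
    have "pc t = pc (t - 1)" using pc_shift[of "t - 1"] by simp
    moreover have "Arg (pc (t - 1)) = 2 * pi * (t - 1)" unfolding pc_def
      by (rule Arg_cis) (use False t pi_gt_zero in \<open>auto simp: algebra_simps\<close>)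
    ultimately have A: "Arg (pc t) = 2 * pi * (t - 1)" by simp
    have "2 * pi * (t - 1) < 0" using t by (intro mult_pos_neg) auto
    hence "Arg (pc t) < 0" using A by simp
    thus ?thesis unfolding \<theta>c_def using A by simp
  qed
qed

lemma theta_range: "\<theta>c z \<in> {0..<1}"
  unfolding \<theta>c_def using Arg_range[of z] pi_gt_zero by (auto simp: field_simps)

lemma pc_theta: "norm z = 1 \<Longrightarrow> pc (\<theta>c z) = z"
proof -
  assume z: "norm z = 1"
  hence z0: "z \<noteq> 0" by auto
  have "pc (\<theta>c z) = cis (Arg z)"
  proof (cases "Arg z < 0")
    case True
    have "pc (\<theta>c z) = pc (Arg z / (2 * pi) + 1)" unfolding \<theta>c_def using True by simp
    also have "\<dots> = pc (Arg z / (2 * pi))" by (rule pc_shift)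
    finally show ?thesis unfolding pc_def by simp
  next
    case False thus ?thesis unfolding \<theta>c_def pc_def by simp
  qed
  also have "\<dots> = z" using cis_Arg[OF z0] z by (simp add: sgn_div_norm)
  finally show ?thesis .
qed

lemma pc_img: "pc ` {0..<1} = sphere 0 1" "pc ` {0..1} = sphere 0 1"
proof -
  have a: "pc ` A \<subseteq> sphere 0 1" for A using pc_norm by auto
  have b: "sphere 0 1 \<subseteq> pc ` {0..<1}"
  proof
    fix z :: complex assume "z \<in> sphere 0 1"
    hence "z = pc (\<theta>c z)" using pc_theta by simp
    thus "z \<in> pc ` {0..<1}" using theta_range by blast
  qed
  show "pc ` {0..<1} = sphere 0 1" using a b by blast
  have c: "pc ` {0..<1} \<subseteq> pc ` {0..1}" by (rule image_mono) auto
  show "pc ` {0..1} = sphere 0 1" using a[of "{0..1}"] b c by (meson order_trans subset_antisym)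
qed

lemma cd_aux: "- 1/2 < y \<Longrightarrow> y \<le> 1/2 \<Longrightarrow> \<bar>Arg (cis (2 * pi * y))\<bar> / (2 * pi) = \<bar>y\<bar>"
proof -
  assume y: "- 1/2 < y" "y \<le> 1/2"
  have "2 * pi * (- 1/2) < 2 * pi * y" using y by (intro mult_strict_left_mono) auto
  moreover have "2 * pi * y \<le> 2 * pi * (1/2)" using y by (intro mult_left_mono) auto
  ultimately have "Arg (cis (2 * pi * y)) = 2 * pi * y"
    by (intro Arg_cis) auto
  thus ?thesis using pi_gt_zero by (simp add: abs_mult)
qed

lemma circle_dist_pc:
  assumes a: "a \<in> {0..<1}" and b: "b \<in> {0..<1}"
  shows "circle_dist (pc a) (pc b) = min \<bar>a - b\<bar> (1 - \<bar>a - b\<bar>)"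
proof -
  define x where "x = a - b"
  have q: "pc a / pc b = pc x" unfolding pc_def x_def cis_divide by (simp add: algebra_simps)
  have x: "-1 < x" "x < 1" using a b unfolding x_def by auto
  have "circle_dist (pc a) (pc b) = \<bar>Arg (pc x)\<bar> / (2 * pi)" unfolding circle_dist_def q ..
  also have "\<dots> = min \<bar>x\<bar> (1 - \<bar>x\<bar>)"
  proof -
    consider "x \<le> - 1/2" | "- 1/2 < x \<and> x \<le> 1/2" | "1/2 < x" by linarith
    thus ?thesis
    proof cases
      case 1
      have "pc x = pc (x + 1)" by (simp add: pc_shift)
      hence "\<bar>Arg (pc x)\<bar> / (2 * pi) = \<bar>x + 1\<bar>" using cd_aux[of "x+1"] 1 x unfolding pc_def by simp
      thus ?thesis using 1 x by auto
    next
      case 2 thus ?thesis using cd_aux[of x] unfolding pc_def by auto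
    next
      case 3
      have "pc x = pc (x - 1)" using pc_shift[of "x - 1"] by simp
      hence "\<bar>Arg (pc x)\<bar> / (2 * pi) = \<bar>x - 1\<bar>" using cd_aux[of "x - 1"] 3 x unfolding pc_def by simp
      thus ?thesis using 3 x by auto
    qed
  qed
  finally show ?thesis unfolding x_def .
qed



lemma pc_ne0: "pc r \<noteq> 0" using pc_norm[of r] by auto

lemma arc_lemma:
  assumes C: "C \<subseteq> sphere 0 1" "connected C" "pc \<alpha> \<in> C" "pc \<beta> \<in> C"
    and ab: "0 \<le> \<alpha>" "\<alpha> \<le> \<beta>" "\<beta> < 1"
  shows "pc ` {\<alpha>..\<beta>} \<subseteq> C \<or> pc ` ({\<beta>..<1} \<union> {0..\<alpha>}) \<subseteq> C"
proof (rule ccontr)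
  assume "\<not> ?thesis"
  then obtain r r' where r: "r \<in> {\<alpha>..\<beta>}" "pc r \<notin> C" and r': "r' \<in> {\<beta>..<1} \<union> {0..\<alpha>}" "pc r' \<notin> C"
    by blast
  have r2: "\<alpha> < r" "r < \<beta>" using r C(3,4) by (auto simp: order.order_iff_strict)
  have r'2: "(\<beta> < r' \<and> r' < 1) \<or> (0 \<le> r' \<and> r' < \<alpha>)" using r' C(3,4) by (auto simp: order.order_iff_strict)
  define \<psi> where "\<psi> z = r + 1/2 + Arg (- (z / pc r)) / (2 * pi)" for z
  have notnp: "- (z / pc r) \<notin> \<real>\<^sub>\<le>\<^sub>0" if z: "z \<in> C" for z
  proof
    assume "- (z / pc r) \<in> \<real>\<^sub>\<le>\<^sub>0"
    then obtain x where x: "- (z / pc r) = of_real x" "x \<le> 0" unfolding nonpos_Reals_def by auto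
    have "norm (- (z / pc r)) = 1" using C(1) z pc_norm[of r] by (auto simp: norm_divide)
    hence "\<bar>x\<bar> = 1" using x by simp
    hence "x = -1" using x by simp
    hence "z / pc r = 1" using x by (metis minus_equation_iff of_real_1 of_real_minus)
    hence "z = pc r" using pc_ne0[of r] by (simp add: divide_eq_eq)
    thus False using z r by simp
  qed
  have cont: "continuous_on C \<psi>"
    unfolding \<psi>_def by (intro continuous_intros) (use notnp pc_ne0 in auto)
  have bck: "pc (\<psi> z) = z" if z: "z \<in> C" for z
  proof -
    define w where "w = - (z / pc r)"
    have nw: "norm w = 1" unfolding w_def using C(1) z pc_norm[of r] by (auto simp: norm_divide)
    hence w0: "w \<noteq> 0" by auto
    have "pc (\<psi> z) = cis (2 * pi * r + pi + Arg w)"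
      unfolding pc_def \<psi>_def w_def using pi_gt_zero by (simp add: algebra_simps)
    also have "\<dots> = cis (2 * pi * r) * cis pi * cis (Arg w)" by (simp only: cis_mult)
    also have "cis (Arg w) = w" using cis_Arg[OF w0] nw by (simp add: sgn_div_norm)
    finally show ?thesis unfolding w_def pc_def using pc_ne0[of r] unfolding pc_def by simp
  qed
  have fwd: "\<psi> (pc x) = x" if x: "r < x" "x < r + 1" for x
  proof -
    have "- (pc x / pc r) = cis (2 * pi * (x - r)) / cis pi"
      unfolding pc_def cis_divide cis_pi by (simp add: algebra_simps)
    also have "\<dots> = cis (2 * pi * (x - r) - pi)" by (rule cis_divide)
    finally have e: "- (pc x / pc r) = cis (2 * pi * (x - r) - pi)" .
    have "2 * pi * 0 < 2 * pi * (x - r)" using x by (intro mult_strict_left_mono) auto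
    moreover have "2 * pi * (x - r) < 2 * pi * 1" using x by (intro mult_strict_left_mono) auto
    ultimately have rng: "2 * pi * (x - r) - pi \<in> {-pi<..pi}" unfolding greaterThanAtMost_iff by simp
    have "Arg (- (pc x / pc r)) = 2 * pi * (x - r) - pi" unfolding e by (rule Arg_cis[OF rng])
    thus ?thesis unfolding \<psi>_def using pi_gt_zero by (simp add: field_simps)
  qed
  have conn: "connected (\<psi> ` C)" by (rule connected_continuous_image[OF cont C(2)])
  have b_in: "\<beta> \<in> \<psi> ` C" using fwd[of \<beta>] r2 ab C(4) by force
  have "\<psi> (pc \<alpha>) = \<alpha> + 1" using fwd[of "\<alpha> + 1"] pc_shift[of \<alpha>] r2 ab by simp
  hence a_in: "\<alpha> + 1 \<in> \<psi> ` C" using C(3) by force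
  define t where "t = (if \<beta> < r' then r' else r' + 1)"
  have t: "\<beta> \<le> t" "t \<le> \<alpha> + 1" unfolding t_def using r'2 ab by auto
  have "t \<in> \<psi> ` C" using connected_contains_Icc[OF conn b_in a_in] t by auto
  then obtain z where z: "z \<in> C" "\<psi> z = t" by auto
  have "pc t = pc r'" unfolding t_def using pc_shift[of r'] by simp
  hence "z = pc r'" using bck[OF z(1)] z(2) by simp
  thus False using z r' by simp
qed

context setting begin

lemma Phi_D: "\<Phi> D = W" using Phi_compl[OF D_borel] Phi_outD by simp

lemma Phi_arc2:
  assumes D: "D = {0..<1}" and ab: "0 \<le> a" "a \<le> b" "b < 1"
  shows "\<Phi> ({b..<1} \<union> {0..a}) = W * (1 - (H b - H a))"
proof -
  have "D = ({b..<1} \<union> {0..a}) \<union> {a<..<b}" using D ab by auto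
  moreover have "\<Phi> (({b..<1} \<union> {0..a}) \<union> {a<..<b}) = \<Phi> ({b..<1} \<union> {0..a}) + \<Phi> {a<..<b}"
    by (rule Phi_add) auto
  ultimately have "\<Phi> ({b..<1} \<union> {0..a}) = W - \<Phi> {a<..<b}" using Phi_D by simp
  also have "\<Phi> {a<..<b} = W * (H b - H a)" using Phi_Ioo[OF ab(2)] W_nz unfolding H_def
    by (simp add: diff_divide_distrib[symmetric])
  finally show ?thesis by (simp add: algebra_simps)
qed

lemma arc_bound:
  assumes D: "D = {0..<1}" and g: "g \<in> Gens" and s: "0 \<le> s" "s \<le> s'" "s' < 1"
    and ab: "0 \<le> a" "a \<le> b" "b < 1"
    and cov: "\<And>S. S = {s..s'} \<or> S = {s'..<1} \<union> {0..s} \<Longrightarrow>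
                 p ` {a..b} \<subseteq> g ` p ` S \<or> p ` ({b..<1} \<union> {0..a}) \<subseteq> g ` p ` S"
  shows "min (H b - H a) (1 - (H b - H a)) \<le> exp \<epsilon> * min (H s' - H s) (1 - (H s' - H s))"
proof -
  let ?m = "min (\<Phi> {a..b}) (\<Phi> ({b..<1} \<union> {0..a}))"
  have 1: "?m \<le> exp \<epsilon> * \<Phi> S" if S: "S = {s..s'} \<or> S = {s'..<1} \<union> {0..s}" for S
  proof -
    have SD: "S \<subseteq> D" "S \<in> sets borel" using S s D by auto
    from cov[OF S] show ?thesis
    proof
      assume "p ` {a..b} \<subseteq> g ` p ` S"
      hence "\<Phi> {a..b} \<le> exp \<epsilon> * \<Phi> S" by (intro Phi_key[OF g _ SD(2) SD(1)]) auto
      thus ?thesis by simp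
    next
      assume "p ` ({b..<1} \<union> {0..a}) \<subseteq> g ` p ` S"
      hence "\<Phi> ({b..<1} \<union> {0..a}) \<le> exp \<epsilon> * \<Phi> S" by (intro Phi_key[OF g _ SD(2) SD(1)]) auto
      thus ?thesis by simp
    qed
  qed
  have "?m \<le> exp \<epsilon> * min (\<Phi> {s..s'}) (\<Phi> ({s'..<1} \<union> {0..s}))"
    using 1[of "{s..s'}"] 1[of "{s'..<1} \<union> {0..s}"] by (auto simp: min_def)
  moreover have "?m = W * min (H b - H a) (1 - (H b - H a))"
    using Phi_seg[OF ab(2)] Phi_arc2[OF D ab] W_ge1 by (auto simp: min_def mult_le_cancel_left_pos)
  moreover have "min (\<Phi> {s..s'}) (\<Phi> ({s'..<1} \<union> {0..s})) = W * min (H s' - H s) (1 - (H s' - H s))"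
    using Phi_seg[OF s(2)] Phi_arc2[OF D s] W_ge1 by (auto simp: min_def mult_le_cancel_left_pos)
  ultimately have "W * min (H b - H a) (1 - (H b - H a)) \<le> W * (exp \<epsilon> * min (H s' - H s) (1 - (H s' - H s)))"
    by (simp add: mult.left_commute)
  moreover have "W > 0" using W_ge1 by simp
  ultimately show ?thesis by (simp add: mult_le_cancel_left_pos)
qed

end



lemma circle_case:
  fixes Gens :: "(complex \<Rightarrow> complex) set" and \<epsilon> :: real
  assumes "finite Gens" and "card Gens \<ge> 2"
    and "\<forall>g\<in>Gens. homeo_of (sphere 0 1) g"
    and "\<forall>g\<in>Gens. \<exists>g'\<in>Gens. homeomorphism (sphere 0 1) (sphere 0 1) g g'"
    and "\<epsilon> > ln (real (card Gens) - 1)"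
  shows "\<exists>h h'. homeomorphism (sphere 0 1) (sphere 0 1) h h' \<and>
           (\<forall>g\<in>Gens. lipschitz_wrt (sphere 0 1) circle_dist (exp \<epsilon>) (h \<circ> g \<circ> h'))"
proof -
  let ?M = "sphere (0::complex) 1"
  interpret S: setting ?M "{0..<1}" pc \<theta>c Gens \<epsilon>
  proof
    show "{0..<1} = {0..1::real} \<or> {0..<1} = {0..<1::real} \<and> pc 1 = pc 0" by (simp add: pc_def)
    show "continuous_on {0..1} pc" unfolding pc_def by (intro continuous_intros)
    show "\<And>z. z \<in> ?M \<Longrightarrow> pc (\<theta>c z) = z" using pc_theta by simp
  qed (use assms pc_img theta_pc theta_range theta_meas in auto)
  obtain h' where hom: "homeomorphism ?M ?M S.hh h'" using S.hh_homeo by blast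
  have p10: "pc 1 = pc 0" by (simp add: pc_def)
  have "lipschitz_wrt ?M circle_dist (exp \<epsilon>) (S.hh \<circ> g \<circ> h')" if g: "g \<in> Gens" for g
    unfolding lipschitz_wrt_def
  proof (intro ballI)
    fix x y assume x: "x \<in> ?M" and y: "y \<in> ?M"
    obtain s where s: "s \<in> {0..<1}" "x = pc (S.H s)" "\<theta>c (g (pc s)) \<in> {0..<1}"
        "pc (\<theta>c (g (pc s))) = g (pc s)" "S.hh (g (h' x)) = pc (S.H (\<theta>c (g (pc s))))"
      using S.reduce[OF hom g x] by blast
    obtain s' where s': "s' \<in> {0..<1}" "y = pc (S.H s')" "\<theta>c (g (pc s')) \<in> {0..<1}"
        "pc (\<theta>c (g (pc s'))) = g (pc s')" "S.hh (g (h' y)) = pc (S.H (\<theta>c (g (pc s'))))"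
      using S.reduce[OF hom g y] by blast
    define \<alpha> where "\<alpha> = \<theta>c (g (pc s))"
    define \<beta> where "\<beta> = \<theta>c (g (pc s'))"
    define lo where "lo = min s s'"
    define hi where "hi = max s s'"
    define a where "a = min \<alpha> \<beta>"
    define b where "b = max \<alpha> \<beta>"
    have lh: "0 \<le> lo" "lo \<le> hi" "hi < 1" unfolding lo_def hi_def using s s' by auto
    have ab: "0 \<le> a" "a \<le> b" "b < 1" unfolding a_def b_def using s(3) s'(3) unfolding \<alpha>_def \<beta>_def by auto
    have ss: "s \<in> {lo, hi}" "s' \<in> {lo, hi}" unfolding lo_def hi_def by auto
    have pab: "{pc a, pc b} = {g (pc s), g (pc s')}"
      unfolding a_def b_def using s(4) s'(4) unfolding \<alpha>_def \<beta>_def by (auto simp: min_def max_def)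
    have cov: "pc ` {a..b} \<subseteq> g ` pc ` S \<or> pc ` ({b..<1} \<union> {0..a}) \<subseteq> g ` pc ` S"
      if S: "S = {lo..hi} \<or> S = {hi..<1} \<union> {0..lo}" for S
    proof (rule arc_lemma)
      have S01: "S \<subseteq> {0..1}" using S lh by auto
      have sub: "pc ` S \<subseteq> ?M" using pc_norm by auto
      show "g ` pc ` S \<subseteq> ?M" using sub S.gen_maps[OF g] by auto
      have cS: "connected (pc ` S)"
        using S
      proof
        assume "S = {lo..hi}"
        thus ?thesis by (intro connected_continuous_image[OF continuous_on_subset[OF S.p_cont]]) (use lh in auto)
      next
        assume S2: "S = {hi..<1} \<union> {0..lo}"
        have i1: "pc ` {hi..1} \<subseteq> pc ` S"
        proof
          fix z assume "z \<in> pc ` {hi..1}"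
          then obtain x where x: "x \<in> {hi..1}" "z = pc x" by auto
          show "z \<in> pc ` S"
          proof (cases "x = 1")
            case True
            hence "z = pc 0" using x p10 by simp
            thus ?thesis unfolding S2 using lh by auto
          next
            case False thus ?thesis unfolding S2 using x by auto
          qed
        qed
        have "pc ` S = pc ` {hi..1} \<union> pc ` {0..lo}"
          using i1 unfolding S2 by auto
        moreover have "connected (pc ` {hi..1})"
          by (intro connected_continuous_image[OF continuous_on_subset[OF S.p_cont]]) (use lh in auto)
        moreover have "connected (pc ` {0..lo})"
          by (intro connected_continuous_image[OF continuous_on_subset[OF S.p_cont]]) (use lh in auto)
        moreover have "pc 0 \<in> pc ` {hi..1} \<inter> pc ` {0..lo}" using p10 lh by (auto intro!: image_eqI[of _ _ 1])
        ultimately show ?thesis using connected_Un by (metis empty_iff)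
      qed
      show "connected (g ` pc ` S)"
        by (rule connected_continuous_image[OF continuous_on_subset[OF conjunct2[OF S.gen_maps[OF g]] sub] cS])
      have "s \<in> S" "s' \<in> S" using S ss lh by auto
      hence "g (pc s) \<in> g ` pc ` S" "g (pc s') \<in> g ` pc ` S" by auto
      moreover have "pc a \<in> {pc a, pc b}" "pc b \<in> {pc a, pc b}" by simp_all
      hence "pc a \<in> {g (pc s), g (pc s')}" "pc b \<in> {g (pc s), g (pc s')}" by (simp_all only: pab)
      ultimately show "pc a \<in> g ` pc ` S" "pc b \<in> g ` pc ` S" by auto
    qed (use ab in auto)
    have bound: "min (S.H b - S.H a) (1 - (S.H b - S.H a)) \<le> exp \<epsilon> * min (S.H hi - S.H lo) (1 - (S.H hi - S.H lo))"
      by (rule S.arc_bound[OF refl g lh ab cov])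
    have H0: "S.H \<alpha> \<in> {0..<1}" "S.H \<beta> \<in> {0..<1}" "S.H s \<in> {0..<1}" "S.H s' \<in> {0..<1}"
      using S.H_D s s' unfolding \<alpha>_def \<beta>_def by auto
    have "circle_dist ((S.hh \<circ> g \<circ> h') x) ((S.hh \<circ> g \<circ> h') y) = min \<bar>S.H \<alpha> - S.H \<beta>\<bar> (1 - \<bar>S.H \<alpha> - S.H \<beta>\<bar>)"
      using s(5) s'(5) circle_dist_pc[OF H0(1,2)] unfolding \<alpha>_def \<beta>_def by simp
    also have "\<bar>S.H \<alpha> - S.H \<beta>\<bar> = S.H b - S.H a" unfolding a_def b_def
      using S.H_mono[of \<alpha> \<beta>] S.H_mono[of \<beta> \<alpha>] s(3) s'(3) unfolding \<alpha>_def \<beta>_def by (auto simp: min_def max_def)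
    also note bound
    also have "S.H hi - S.H lo = \<bar>S.H s - S.H s'\<bar>" unfolding lo_def hi_def
      using S.H_mono[of s s'] S.H_mono[of s' s] s(1) s'(1) by (auto simp: min_def max_def)
    also have "min \<bar>S.H s - S.H s'\<bar> (1 - \<bar>S.H s - S.H s'\<bar>) = circle_dist x y"
      using s(2) s'(2) circle_dist_pc[OF H0(3,4)] by simp
    finally show "circle_dist ((S.hh \<circ> g \<circ> h') x) ((S.hh \<circ> g \<circ> h') y) \<le> exp \<epsilon> * circle_dist x y" .
  qed
  thus ?thesis using hom by blast
qed

theorem mainTheorem1:
  fixes M :: "complex set" and d :: "complex \<Rightarrow> complex \<Rightarrow> real"
    and Gens :: "(complex \<Rightarrow> complex) set" and \<epsilon> :: real
  assumes "one_manifold_model M d"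
    and "finite Gens" and "card Gens \<ge> 2"
    and "\<forall>g\<in>Gens. homeo_of M g"
    and "\<forall>g\<in>Gens. \<exists>g'\<in>Gens. homeomorphism M M g g'"
    and "\<epsilon> > ln (real (card Gens) - 1)"
  shows "\<exists>h h'. homeomorphism M M h h' \<and>
           (\<forall>g\<in>Gens. lipschitz_wrt M d (exp \<epsilon>) (h \<circ> g \<circ> h'))"
  using assms(1) unfolding one_manifold_model_def
proof
  assume "M = sphere 0 1 \<and> d = circle_dist"
  thus ?thesis using circle_case[OF assms(2,3)] assms(4-6) by simp
next
  assume "M = unit_interval_c \<and> d = (\<lambda>z w. dist z w)"
  thus ?thesis using interval_case[OF assms(2,3)] assms(4-6) by simp
qed


end
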